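(* Let $F$ be a perfect field of characteristic $\neq 2$ and let $(V,q)$ be a nondegenerate quadratic space over $F$ with $\dim V=n=2m+1$, $m$ odd, of maximal Witt index, with basis $\{e_0,e_1,f_1,\ldots,e_m,f_m\}$ where $q(e_0)\neq0$, $e_0\perp e_i,f_i$, $B(e_i,f_j)=\delta_{ij}$, $B(e_i,e_j)=0=B(f_i,f_j)$. Let $t$ be an element of $T=\{\lambda_0\prod_{i=1}^m(e_i+f_i)(e_i+\lambda_if_i):\lambda_i\in F^*\}\subseteq\Gamma^+(V,q)$. Then there exists $s\in\Gamma^+(V,q)$ such that $sts^{-1}=N(t)t^{-1}$, $N(s)=1$ and $s^2=(-1)^{m(m+1)/2}$.
   Context: $B(x,y)=q(x+y)-q(x)-q(y)$. $C(V,q)=T(V)/\langle x\otimes x-q(x)\cdot1\rangle=C_0\oplus C_1$, $\Gamma(V,q)=\{u\in C(V,q)^\times: uVu^{-1}\subseteq V\}$, $\Gamma^+(V,q)=\Gamma(V,q)\cap C_0(V,q)$. With $\tau$ the anti-involution reversing products of vectors, $N(u)=\tau(u)u$. *)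

theory Defs
  imports Main
begin

definition perfect_field :: "'a::field itself \<Rightarrow> bool" where
  "perfect_field _ \<longleftrightarrow> CHAR('a) = 0 \<or> (\<forall>x::'a. \<exists>y. y ^ CHAR('a) = x)"

(* V = F^n, coordinates w.r.t. the basis.  Index 0 is e_0, index 2i-1 is e_i,
   index 2i is f_i (1 \<le> i \<le> m), n = 2m+1. *)
definition vecsp :: "nat \<Rightarrow> (nat \<Rightarrow> 'a::zero) set" where
  "vecsp n = {x. \<forall>i\<ge>n. x i = 0}"

(* the quadratic form with q(e_0) = a, e_0 orthogonal to e_i,f_i, B(e_i,f_j)=\<delta>_ij,
   B(e_i,e_j) = 0 = B(f_i,f_j) (hence q(e_i) = q(f_i) = 0 as char \<noteq> 2). *)
definition qform :: "'a::field \<Rightarrow> nat \<Rightarrow> (nat \<Rightarrow> 'a) \<Rightarrow> 'a" where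
  "qform a m x = a * (x 0)^2 + (\<Sum>i=1..m. x (2*i - 1) * x (2*i))"

definition basis_vec :: "nat \<Rightarrow> nat \<Rightarrow> 'a::{zero,one}" where
  "basis_vec k = (\<lambda>j. if j = k then 1 else 0)"

abbreviation e_vec :: "nat \<Rightarrow> nat \<Rightarrow> 'a::{zero,one}" where "e_vec i \<equiv> basis_vec (2*i - 1)"
abbreviation f_vec :: "nat \<Rightarrow> nat \<Rightarrow> 'a::{zero,one}" where "f_vec i \<equiv> basis_vec (2*i)"

(* Tensor algebra T(V): elements are finitely supported coefficient functions on
   words (lists) of basis indices < n. *)
type_synonym 'a tens = "nat list \<Rightarrow> 'a"

definition tens_ok :: "nat \<Rightarrow> 'a::zero tens \<Rightarrow> bool" where
  "tens_ok n u \<longleftrightarrow> finite {w. u w \<noteq> 0} \<and> (\<forall>w. u w \<noteq> 0 \<longrightarrow> set w \<subseteq> {..<n})"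

definition tmul :: "'a::comm_ring_1 tens \<Rightarrow> 'a tens \<Rightarrow> 'a tens" where
  "tmul u v = (\<lambda>w. \<Sum>k\<le>length w. u (take k w) * v (drop k w))"

definition tadd :: "'a::comm_ring_1 tens \<Rightarrow> 'a tens \<Rightarrow> 'a tens" where
  "tadd u v = (\<lambda>w. u w + v w)"

definition tsub :: "'a::comm_ring_1 tens \<Rightarrow> 'a tens \<Rightarrow> 'a tens" where
  "tsub u v = (\<lambda>w. u w - v w)"

definition tsmul :: "'a::comm_ring_1 \<Rightarrow> 'a tens \<Rightarrow> 'a tens" where
  "tsmul c u = (\<lambda>w. c * u w)"

definition tone :: "'a::comm_ring_1 tens" where
  "tone = (\<lambda>w. if w = [] then 1 else 0)"

definition tvec :: "(nat \<Rightarrow> 'a::comm_ring_1) \<Rightarrow> 'a tens" where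
  "tvec x = (\<lambda>w. case w of [i] \<Rightarrow> x i | _ \<Rightarrow> 0)"

definition tprod_list :: "'a::comm_ring_1 tens list \<Rightarrow> 'a tens" where
  "tprod_list us = foldr tmul us tone"

definition trev :: "'a tens \<Rightarrow> 'a tens" where
  "trev u = (\<lambda>w. u (rev w))"

inductive_set clideal :: "nat \<Rightarrow> ((nat \<Rightarrow> 'a::comm_ring_1) \<Rightarrow> 'a) \<Rightarrow> 'a tens set"
  for n q where
  zero: "(\<lambda>_. 0) \<in> clideal n q"
| gen: "x \<in> vecsp n \<Longrightarrow> tens_ok n u \<Longrightarrow> tens_ok n v \<Longrightarrow>
        tmul u (tmul (tsub (tmul (tvec x) (tvec x)) (tsmul (q x) tone)) v) \<in> clideal n q"
| add: "u \<in> clideal n q \<Longrightarrow> v \<in> clideal n q \<Longrightarrow> tadd u v \<in> clideal n q"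

(* equality in C(V,q) = T(V)/I of the classes of two tensors *)
definition cl_eq :: "nat \<Rightarrow> ((nat \<Rightarrow> 'a::comm_ring_1) \<Rightarrow> 'a) \<Rightarrow> 'a tens \<Rightarrow> 'a tens \<Rightarrow> bool" where
  "cl_eq n q u v \<longleftrightarrow> tsub u v \<in> clideal n q"

definition cl_inv :: "nat \<Rightarrow> ((nat \<Rightarrow> 'a::comm_ring_1) \<Rightarrow> 'a) \<Rightarrow> 'a tens \<Rightarrow> 'a tens \<Rightarrow> bool" where
  "cl_inv n q u ui \<longleftrightarrow> tens_ok n ui \<and> cl_eq n q (tmul u ui) tone \<and> cl_eq n q (tmul ui u) tone"

definition cl_even :: "nat \<Rightarrow> ((nat \<Rightarrow> 'a::comm_ring_1) \<Rightarrow> 'a) \<Rightarrow> 'a tens \<Rightarrow> bool" where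
  "cl_even n q u \<longleftrightarrow> (\<exists>u'. tens_ok n u' \<and> (\<forall>w. u' w \<noteq> 0 \<longrightarrow> even (length w)) \<and> cl_eq n q u u')"

definition in_Gamma :: "nat \<Rightarrow> ((nat \<Rightarrow> 'a::comm_ring_1) \<Rightarrow> 'a) \<Rightarrow> 'a tens \<Rightarrow> bool" where
  "in_Gamma n q u \<longleftrightarrow> tens_ok n u \<and> (\<exists>ui. cl_inv n q u ui \<and>
     (\<forall>x\<in>vecsp n. \<exists>y\<in>vecsp n. cl_eq n q (tmul (tmul u (tvec x)) ui) (tvec y)))"

definition in_Gamma_plus :: "nat \<Rightarrow> ((nat \<Rightarrow> 'a::comm_ring_1) \<Rightarrow> 'a) \<Rightarrow> 'a tens \<Rightarrow> bool" where
  "in_Gamma_plus n q u \<longleftrightarrow> in_Gamma n q u \<and> cl_even n q u"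

definition Nrm :: "'a::comm_ring_1 tens \<Rightarrow> 'a tens" where
  "Nrm u = tmul (trev u) u"

definition T_elem :: "nat \<Rightarrow> (nat \<Rightarrow> 'a::field) \<Rightarrow> 'a tens" where
  "T_elem m lam = tsmul (lam 0) (tprod_list (map (\<lambda>i.
      tmul (tadd (tvec (e_vec i)) (tvec (f_vec i)))
           (tadd (tvec (e_vec i)) (tsmul (lam i) (tvec (f_vec i))))) [1..<m+1]))"

end

theory Submission
  imports Defs
begin

lemma tmul_assoc: "tmul u (tmul v z) = tmul (tmul u v) (z::'a::comm_ring_1 tens)"
proof
  fix w :: "nat list"
  define L where "L = length w"
  define G where "G = (\<lambda>a b. u (take a w) * v (take (b-a) (drop a w)) * z (drop b w))"
  have "tmul u (tmul v z) w = (\<Sum>k\<le>L. \<Sum>j\<le>L-k. G k (k+j))"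
    unfolding tmul_def G_def L_def
    by (simp add: sum_distrib_left mult.assoc add.commute)
  also have "\<dots> = sum (\<lambda>(k,j). G k (k+j)) (SIGMA k:{..L}. {..L-k})"
    by (simp add: sum.Sigma)
  also have "\<dots> = sum (\<lambda>(b,a). G a b) (SIGMA b:{..L}. {..b})"
    by (rule sum.reindex_bij_witness[where i="\<lambda>(b,a). (a, b-a)" and j="\<lambda>(k,j). (k+j, k)"]) auto
  also have "\<dots> = (\<Sum>b\<le>L. \<Sum>a\<le>b. G a b)"
    by (simp add: sum.Sigma)
  also have "\<dots> = tmul (tmul u v) z w"
    unfolding tmul_def G_def L_def
    by (auto simp: sum_distrib_right min_def take_drop split: if_splits intro!: sum.cong)
  finally show "tmul u (tmul v z) w = tmul (tmul u v) z w" .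
qed

lemma tone_take: "k \<le> length w \<Longrightarrow> tone (take k w) = (if k = 0 then 1 else (0::'a::comm_ring_1))"
  by (cases w) (auto simp: tone_def)

lemma tone_drop: "k \<le> length w \<Longrightarrow> tone (drop k w) = (if k = length w then 1 else (0::'a::comm_ring_1))"
  by (auto simp: tone_def)

lemma tmul_tone_left[simp]: "tmul tone u = (u::'a::comm_ring_1 tens)"
proof
  fix w
  have "tmul tone u w = (\<Sum>k\<le>length w. if k = 0 then u (drop k w) else 0)"
    unfolding tmul_def by (rule sum.cong) (auto simp: tone_take)
  then show "tmul tone u w = u w" by simp
qed

lemma tmul_tone_right[simp]: "tmul u tone = (u::'a::comm_ring_1 tens)"
proof
  fix w
  have "tmul u tone w = (\<Sum>k\<le>length w. if k = length w then u (take k w) else 0)"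
    unfolding tmul_def by (rule sum.cong) (auto simp: tone_drop)
  then show "tmul u tone w = u w" by simp
qed

lemma tmul_tadd_left: "tmul (tadd u v) z = tadd (tmul u z) (tmul v (z::'a::comm_ring_1 tens))"
  by (rule ext) (simp add: tmul_def tadd_def sum.distrib algebra_simps)
lemma tmul_tadd_right: "tmul z (tadd u v) = tadd (tmul z u) (tmul z (v::'a::comm_ring_1 tens))"
  by (rule ext) (simp add: tmul_def tadd_def sum.distrib algebra_simps)
lemma tmul_tsub_left: "tmul (tsub u v) z = tsub (tmul u z) (tmul v (z::'a::comm_ring_1 tens))"
  by (rule ext) (simp add: tmul_def tsub_def sum_subtractf algebra_simps)
lemma tmul_tsub_right: "tmul z (tsub u v) = tsub (tmul z u) (tmul z (v::'a::comm_ring_1 tens))"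
  by (rule ext) (simp add: tmul_def tsub_def sum_subtractf algebra_simps)
lemma tmul_tsmul_left[simp]: "tmul (tsmul c u) z = tsmul c (tmul u (z::'a::comm_ring_1 tens))"
  by (rule ext) (simp add: tmul_def tsmul_def sum_distrib_left algebra_simps)
lemma tmul_tsmul_right[simp]: "tmul z (tsmul c u) = tsmul c (tmul z (u::'a::comm_ring_1 tens))"
  by (rule ext) (simp add: tmul_def tsmul_def sum_distrib_left algebra_simps)
lemma tsmul_tsmul[simp]: "tsmul c (tsmul d u) = tsmul (c*d) (u::'a::comm_ring_1 tens)"
  by (rule ext) (simp add: tsmul_def)
lemma tsmul_one[simp]: "tsmul 1 u = (u::'a::comm_ring_1 tens)"
  by (rule ext) (simp add: tsmul_def)
lemma tmul_zero_right[simp]: "tmul u (\<lambda>_. 0) = (\<lambda>_. (0::'a::comm_ring_1))"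
  by (rule ext) (simp add: tmul_def)
lemma tmul_zero_left[simp]: "tmul (\<lambda>_. 0) u = (\<lambda>_. (0::'a::comm_ring_1))"
  by (rule ext) (simp add: tmul_def)

lemma tens_ok_tadd[intro]: "tens_ok n u \<Longrightarrow> tens_ok n v \<Longrightarrow> tens_ok n (tadd u v)"
  unfolding tens_ok_def tadd_def
  apply (intro conjI)
   apply (auto intro: finite_subset[of _ "{w. u w \<noteq> 0} \<union> {w. v w \<noteq> 0}"])[1]
  by (metis add.right_neutral add_0 subsetD)
lemma tens_ok_tsub[intro]: "tens_ok n u \<Longrightarrow> tens_ok n v \<Longrightarrow> tens_ok n (tsub u v)"
  unfolding tens_ok_def tsub_def
  apply (intro conjI)
   apply (auto intro: finite_subset[of _ "{w. u w \<noteq> 0} \<union> {w. v w \<noteq> 0}"])[1]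
  by (metis diff_0 diff_zero minus_zero)
lemma tens_ok_tsmul[intro]: "tens_ok n u \<Longrightarrow> tens_ok n (tsmul c u)"
  unfolding tens_ok_def tsmul_def
  apply (intro conjI)
   apply (auto intro: finite_subset[of _ "{w. u w \<noteq> 0}"])[1]
  by (metis mult_zero_right)
lemma tens_ok_tone[intro]: "tens_ok n tone"
  unfolding tens_ok_def tone_def by auto
lemma tens_ok_zero[intro]: "tens_ok n (\<lambda>_. 0)"
  unfolding tens_ok_def by auto
lemma tens_ok_tvec[intro]: "x \<in> vecsp n \<Longrightarrow> tens_ok n (tvec x)"
proof -
  assume x: "x \<in> vecsp n"
  have s: "{w. tvec x w \<noteq> 0} \<subseteq> (\<lambda>i. [i]) ` {..<n}"
  proof
    fix w assume "w \<in> {w. tvec x w \<noteq> 0}"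
    then obtain i where "w = [i]" "x i \<noteq> 0" unfolding tvec_def by (auto split: list.splits)
    from x have "\<forall>i\<ge>n. x i = 0" by (simp add: vecsp_def)
    with \<open>x i \<noteq> 0\<close> have "i < n" using not_less by blast
    with \<open>w = [i]\<close> show "w \<in> (\<lambda>i. [i]) ` {..<n}" by auto
  qed
  then have "finite {w. tvec x w \<noteq> 0}" by (rule finite_subset) auto
  moreover have "\<forall>w. tvec x w \<noteq> 0 \<longrightarrow> set w \<subseteq> {..<n}"
    using s by fastforce
  ultimately show ?thesis unfolding tens_ok_def by (intro conjI)
qed

lemma tmul_nonzero:
  assumes "tmul u v w \<noteq> 0"
  shows "\<exists>x y. w = x @ y \<and> u x \<noteq> 0 \<and> v y \<noteq> 0"
proof -
  from assms obtain k where "u (take k w) * v (drop k w) \<noteq> 0"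
    unfolding tmul_def by (metis (no_types, lifting) sum.neutral)
  then show ?thesis by (intro exI[of _ "take k w"] exI[of _ "drop k w"]) auto
qed

lemma tens_ok_tmul[intro]: "tens_ok n u \<Longrightarrow> tens_ok n v \<Longrightarrow> tens_ok n (tmul u v)"
proof -
  assume u: "tens_ok n u" and v: "tens_ok n v"
  have "{w. tmul u v w \<noteq> 0} \<subseteq> (\<lambda>(x,y). x @ y) ` ({w. u w \<noteq> 0} \<times> {w. v w \<noteq> 0})"
  proof
    fix w assume "w \<in> {w. tmul u v w \<noteq> 0}"
    then obtain x y where "w = x@y" "u x \<noteq> 0" "v y \<noteq> 0" using tmul_nonzero by blast
    then show "w \<in> (\<lambda>(x,y). x @ y) ` ({w. u w \<noteq> 0} \<times> {w. v w \<noteq> 0})"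
      by (intro rev_image_eqI[of "(x,y)"]) auto
  qed
  moreover have "finite ((\<lambda>(x,y). x @ y) ` ({w. u w \<noteq> 0} \<times> {w. v w \<noteq> 0}))"
    using u v unfolding tens_ok_def by auto
  ultimately have "finite {w. tmul u v w \<noteq> 0}" using finite_subset by blast
  moreover have "\<forall>w. tmul u v w \<noteq> 0 \<longrightarrow> set w \<subseteq> {..<n}"
  proof (intro allI impI)
    fix w assume "tmul u v w \<noteq> 0"
    then obtain x y where "w = x@y" "u x \<noteq> 0" "v y \<noteq> 0" using tmul_nonzero by blast
    then show "set w \<subseteq> {..<n}" using u v unfolding tens_ok_def by auto
  qed
  ultimately show ?thesis unfolding tens_ok_def by (intro conjI)
qed

lemma tens_ok_trev[intro]: "tens_ok n u \<Longrightarrow> tens_ok n (trev u)"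
proof -
  assume u: "tens_ok n u"
  have "{w. trev u w \<noteq> 0} = rev ` {w. u w \<noteq> 0}"
    unfolding trev_def by (auto intro: image_eqI[where x="rev _"])
  then show ?thesis using u unfolding tens_ok_def trev_def
    by (metis (mono_tags, lifting) finite_imageI set_rev)
qed

lemma trev_tmul: "trev (tmul u v) = tmul (trev v) (trev (u::'a::comm_ring_1 tens))"
proof
  fix w :: "nat list"
  have "trev (tmul u v) w = (\<Sum>k\<le>length w. u (take k (rev w)) * v (drop k (rev w)))"
    by (simp add: trev_def tmul_def)
  also have "\<dots> = (\<Sum>k\<le>length w. v (rev (take k w)) * u (rev (drop k w)))"
    by (rule sum.reindex_bij_witness[where i="\<lambda>k. length w - k" and j="\<lambda>k. length w - k"])
       (auto simp: take_rev drop_rev mult.commute)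
  also have "\<dots> = tmul (trev v) (trev u) w" by (simp add: trev_def tmul_def)
  finally show "trev (tmul u v) w = tmul (trev v) (trev u) w" .
qed
lemma trev_tvec[simp]: "trev (tvec x) = tvec x"
proof
  fix w show "trev (tvec x) w = tvec x w"
    unfolding trev_def tvec_def
    by (cases w rule: rev_cases) (auto split: list.splits simp: Cons_eq_append_conv)
qed
lemma trev_tsmul[simp]: "trev (tsmul c u) = tsmul c (trev u)"
  by (simp add: trev_def tsmul_def)
lemma trev_tone[simp]: "trev tone = tone"
  by (rule ext) (simp add: trev_def tone_def)

lemma clideal_ok: "c \<in> clideal n q \<Longrightarrow> tens_ok n c"
  by (induction rule: clideal.induct)
     (auto intro!: tens_ok_tmul tens_ok_tsub tens_ok_tsmul tens_ok_tvec tens_ok_tone tens_ok_tadd tens_ok_zero)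

lemma clideal_tmul_left: "c \<in> clideal n q \<Longrightarrow> tens_ok n p \<Longrightarrow> tmul p c \<in> clideal n q"
proof (induction rule: clideal.induct)
  case zero then show ?case by (simp add: clideal.zero)
next
  case (gen x u v)
  let ?g = "tsub (tmul (tvec x) (tvec x)) (tsmul (q x) tone)"
  have "tmul p (tmul u (tmul ?g v)) = tmul (tmul p u) (tmul ?g v)" by (simp only: tmul_assoc)
  then show ?case using gen by (simp add: clideal.gen tens_ok_tmul)
next
  case (add u v) then show ?case by (simp add: tmul_tadd_right clideal.add)
qed

lemma clideal_tmul_right: "c \<in> clideal n q \<Longrightarrow> tens_ok n p \<Longrightarrow> tmul c p \<in> clideal n q"
proof (induction rule: clideal.induct)
  case zero then show ?case by (simp add: clideal.zero)
next
  case (gen x u v)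
  let ?g = "tsub (tmul (tvec x) (tvec x)) (tsmul (q x) tone)"
  have "tmul (tmul u (tmul ?g v)) p = tmul u (tmul ?g (tmul v p))" by (simp only: tmul_assoc)
  then show ?case using gen by (simp add: clideal.gen tens_ok_tmul)
next
  case (add u v) then show ?case by (simp add: tmul_tadd_left clideal.add)
qed

lemma clideal_tsmul: "c \<in> clideal n q \<Longrightarrow> tsmul r c \<in> clideal n q"
proof (induction rule: clideal.induct)
  case zero then show ?case by (simp add: tsmul_def clideal.zero)
next
  case (gen x u v) 
  have "tsmul r (tmul u (tmul (tsub (tmul (tvec x) (tvec x)) (tsmul (q x) tone)) v))
     = tmul (tsmul r u) (tmul (tsub (tmul (tvec x) (tvec x)) (tsmul (q x) tone)) v)" by simp
  then show ?case using gen by (metis clideal.gen tens_ok_tsmul)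
next
  case (add u v)
  have "tsmul r (tadd u v) = tadd (tsmul r u) (tsmul r v)" by (rule ext) (simp add: tsmul_def tadd_def algebra_simps)
  then show ?case using add by (simp add: clideal.add)
qed

lemma clideal_tsub: "c \<in> clideal n q \<Longrightarrow> d \<in> clideal n q \<Longrightarrow> tsub c d \<in> clideal n q"
proof -
  assume "c \<in> clideal n q" "d \<in> clideal n q"
  moreover have "tsub c d = tadd c (tsmul (-1) d)" by (rule ext) (simp add: tsub_def tadd_def tsmul_def)
  ultimately show ?thesis by (simp add: clideal.add clideal_tsmul)
qed

lemma cl_eq_refl[intro]: "cl_eq n q u u"
  unfolding cl_eq_def tsub_def by (simp add: clideal.zero)

lemma cl_eq_eq: "u = v \<Longrightarrow> cl_eq n q u v" by auto

lemma cl_eq_sym: "cl_eq n q u v \<Longrightarrow> cl_eq n q v u"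
proof -
  assume "cl_eq n q u v"
  moreover have "tsub v u = tsmul (-1) (tsub u v)" by (rule ext) (simp add: tsub_def tsmul_def)
  ultimately show ?thesis unfolding cl_eq_def by (simp add: clideal_tsmul)
qed

lemma cl_eq_trans[trans]: "cl_eq n q u v \<Longrightarrow> cl_eq n q v z \<Longrightarrow> cl_eq n q u z"
proof -
  assume "cl_eq n q u v" "cl_eq n q v z"
  moreover have "tsub u z = tadd (tsub u v) (tsub v z)" by (rule ext) (simp add: tsub_def tadd_def)
  ultimately show ?thesis unfolding cl_eq_def by (simp add: clideal.add)
qed

lemma cl_eq_tmul_left: "cl_eq n q a a' \<Longrightarrow> tens_ok n b \<Longrightarrow> cl_eq n q (tmul a b) (tmul a' b)"
  unfolding cl_eq_def by (simp add: tmul_tsub_left[symmetric] clideal_tmul_right)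
lemma cl_eq_tmul_right: "cl_eq n q b b' \<Longrightarrow> tens_ok n a \<Longrightarrow> cl_eq n q (tmul a b) (tmul a b')"
  unfolding cl_eq_def by (simp add: tmul_tsub_right[symmetric] clideal_tmul_left)
lemma cl_eq_tsmul: "cl_eq n q a a' \<Longrightarrow> cl_eq n q (tsmul c a) (tsmul c a')"
proof -
  assume "cl_eq n q a a'"
  moreover have "tsub (tsmul c a) (tsmul c a') = tsmul c (tsub a a')" by (rule ext) (simp add: tsub_def tsmul_def algebra_simps)
  ultimately show ?thesis unfolding cl_eq_def by (simp add: clideal_tsmul)
qed
lemma cl_eq_tadd: "cl_eq n q a a' \<Longrightarrow> cl_eq n q b b' \<Longrightarrow> cl_eq n q (tadd a b) (tadd a' b')"
proof -
  assume "cl_eq n q a a'" "cl_eq n q b b'"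
  moreover have "tsub (tadd a b) (tadd a' b') = tadd (tsub a a') (tsub b b')" by (rule ext) (simp add: tsub_def tadd_def algebra_simps)
  ultimately show ?thesis unfolding cl_eq_def by (simp add: clideal.add)
qed

definition vadd :: "(nat \<Rightarrow> 'a::comm_ring_1) \<Rightarrow> (nat \<Rightarrow> 'a) \<Rightarrow> nat \<Rightarrow> 'a" where
  "vadd x y = (\<lambda>k. x k + y k)"
definition vsc :: "'a::comm_ring_1 \<Rightarrow> (nat \<Rightarrow> 'a) \<Rightarrow> nat \<Rightarrow> 'a" where
  "vsc c x = (\<lambda>k. c * x k)"
definition Bq :: "((nat \<Rightarrow> 'a::comm_ring_1) \<Rightarrow> 'a) \<Rightarrow> (nat \<Rightarrow> 'a) \<Rightarrow> (nat \<Rightarrow> 'a) \<Rightarrow> 'a" where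
  "Bq q x y = q (vadd x y) - q x - q y"

lemma Bq_sym: "Bq q x y = Bq q y x"
  unfolding Bq_def vadd_def by (simp add: add.commute)

lemma vecsp_vadd[intro]: "x \<in> vecsp n \<Longrightarrow> y \<in> vecsp n \<Longrightarrow> vadd x y \<in> vecsp n"
  unfolding vecsp_def vadd_def by auto
lemma vecsp_vsc[intro]: "x \<in> vecsp n \<Longrightarrow> vsc c x \<in> vecsp n"
  unfolding vecsp_def vsc_def by auto

lemma tvec_vadd: "tvec (vadd x y) = tadd (tvec x) (tvec y)"
  by (rule ext) (simp add: tvec_def tadd_def vadd_def split: list.splits)
lemma tvec_vsc: "tvec (vsc c x) = tsmul c (tvec x)"
  by (rule ext) (simp add: tvec_def tsmul_def vsc_def split: list.splits)

lemma cl_sq: "x \<in> vecsp n \<Longrightarrow> cl_eq n q (tmul (tvec x) (tvec x)) (tsmul (q x) tone)"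
  unfolding cl_eq_def using clideal.gen[of x n tone tone q] by auto

lemma cl_anti: assumes "x \<in> vecsp n" "y \<in> vecsp n"
  shows "cl_eq n q (tadd (tmul (tvec x) (tvec y)) (tmul (tvec y) (tvec x))) (tsmul (Bq q x y) tone)"
proof -
  have c1: "tsub (tmul (tvec (vadd x y)) (tvec (vadd x y))) (tsmul (q (vadd x y)) tone) \<in> clideal n q"
    using cl_sq[of "vadd x y" n q] assms unfolding cl_eq_def by auto
  have c2: "tsub (tmul (tvec x) (tvec x)) (tsmul (q x) tone) \<in> clideal n q"
    using cl_sq[of x n q] assms unfolding cl_eq_def by auto
  have c3: "tsub (tmul (tvec y) (tvec y)) (tsmul (q y) tone) \<in> clideal n q"
    using cl_sq[of y n q] assms unfolding cl_eq_def by auto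
  have "tsub (tadd (tmul (tvec x) (tvec y)) (tmul (tvec y) (tvec x))) (tsmul (Bq q x y) tone)
    = tsub (tsub (tsub (tmul (tvec (vadd x y)) (tvec (vadd x y))) (tsmul (q (vadd x y)) tone))
        (tsub (tmul (tvec x) (tvec x)) (tsmul (q x) tone)))
        (tsub (tmul (tvec y) (tvec y)) (tsmul (q y) tone))"
    unfolding tvec_vadd tmul_tadd_left tmul_tadd_right
    by (rule ext) (simp add: tsub_def tadd_def tsmul_def Bq_def algebra_simps)
  then show ?thesis unfolding cl_eq_def using c1 c2 c3 by (simp add: clideal_tsub)
qed

lemma cl_orth: assumes "x \<in> vecsp n" "y \<in> vecsp n" "Bq q x y = 0"
  shows "cl_eq n q (tmul (tvec y) (tvec x)) (tsmul (-1) (tmul (tvec x) (tvec y)))"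
proof -
  have "tsub (tmul (tvec y) (tvec x)) (tsmul (-1) (tmul (tvec x) (tvec y)))
      = tsub (tadd (tmul (tvec x) (tvec y)) (tmul (tvec y) (tvec x))) (tsmul (Bq q x y) tone)"
    using assms(3) by (rule_tac ext) (simp add: tsub_def tadd_def tsmul_def)
  then show ?thesis using cl_anti[OF assms(1,2), of q] unfolding cl_eq_def by simp
qed

lemma cl_eq_trans_eq1[trans]: "u = v \<Longrightarrow> cl_eq n q v z \<Longrightarrow> cl_eq n q u z" by simp
lemma cl_eq_trans_eq2[trans]: "cl_eq n q u v \<Longrightarrow> v = z \<Longrightarrow> cl_eq n q u z" by simp

definition vp :: "(nat \<Rightarrow> 'a::comm_ring_1) list \<Rightarrow> 'a tens" where
  "vp xs = foldr (\<lambda>x acc. tmul (tvec x) acc) xs tone"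

lemma vp_Nil[simp]: "vp [] = tone" by (simp add: vp_def)
lemma vp_Cons[simp]: "vp (x # xs) = tmul (tvec x) (vp xs)" by (simp add: vp_def)
lemma vp_append: "vp (xs @ ys) = tmul (vp xs) (vp ys)"
  by (induction xs) (simp_all add: tmul_assoc)
lemma vp_snoc: "vp (xs @ [y]) = tmul (vp xs) (tvec y)"
  by (simp add: vp_append)
lemma vp_ok[intro]: "set xs \<subseteq> vecsp n \<Longrightarrow> tens_ok n (vp xs)"
  by (induction xs) (auto intro!: tens_ok_tmul tens_ok_tvec tens_ok_tone)
lemma vp_ok_rev[intro]: "set xs \<subseteq> vecsp n \<Longrightarrow> tens_ok n (vp (rev xs))"
  by (rule vp_ok) simp
lemma trev_vp: "trev (vp xs) = vp (rev (xs::(nat \<Rightarrow> 'a::comm_ring_1) list))"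
  by (induction xs) (simp_all add: trev_tmul vp_snoc)

lemma vp_len: "vp xs w \<noteq> 0 \<Longrightarrow> length w = length xs"
proof (induction xs arbitrary: w)
  case Nil then show ?case by (simp add: tone_def split: if_splits)
next
  case (Cons x xs)
  then obtain a b where "w = a @ b" "tvec x a \<noteq> 0" "vp xs b \<noteq> 0"
    using tmul_nonzero[of "tvec x" "vp xs" w] by auto
  moreover then have "length a = 1" by (auto simp: tvec_def split: list.splits)
  ultimately show ?case using Cons.IH by auto
qed

lemma cl_norm: "set xs \<subseteq> vecsp n \<Longrightarrow>
   cl_eq n q (tmul (vp (rev xs)) (vp xs)) (tsmul (prod_list (map q xs)) tone)"
proof (induction xs)
  case Nil then show ?case by auto
next
  case (Cons x xs)
  let ?R = "vp (rev xs)" and ?P = "vp xs" and ?X = "tvec x"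
  have ok: "tens_ok n ?R" "tens_ok n ?P" "x \<in> vecsp n" using Cons.prems by auto
  have "tmul (vp (rev (x#xs))) (vp (x#xs)) = tmul ?R (tmul (tmul ?X ?X) ?P)"
    by (simp add: vp_snoc tmul_assoc)
  also have "cl_eq n q \<dots> (tmul ?R (tmul (tsmul (q x) tone) ?P))"
    by (intro cl_eq_tmul_right cl_eq_tmul_left cl_sq ok)
  also have "\<dots> = tsmul (q x) (tmul ?R ?P)" by simp
  also have "cl_eq n q \<dots> (tsmul (q x) (tsmul (prod_list (map q xs)) tone))"
    using Cons by (intro cl_eq_tsmul) auto
  also have "\<dots> = tsmul (prod_list (map q (x#xs))) tone" by simp
  finally show ?case .
qed

lemma cl_norm': "set xs \<subseteq> vecsp n \<Longrightarrow>
   cl_eq n q (tmul (vp xs) (vp (rev xs))) (tsmul (prod_list (map q xs)) tone)"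
  using cl_norm[of "rev xs" n q] by (simp add: rev_map[symmetric] prod_list.rev)

lemma cl_pass: "x \<in> vecsp n \<Longrightarrow> set ys \<subseteq> vecsp n \<Longrightarrow> \<forall>y\<in>set ys. Bq q x y = 0 \<Longrightarrow>
   cl_eq n q (tmul (vp ys) (tvec x)) (tsmul ((-1)^length ys) (tmul (tvec x) (vp ys)))"
proof (induction ys)
  case Nil then show ?case by auto
next
  case (Cons y ys)
  let ?P = "vp ys" and ?X = "tvec x" and ?Y = "tvec y"
  have ok: "tens_ok n ?P" "y \<in> vecsp n" "tens_ok n ?X" "tens_ok n ?Y" using Cons.prems by auto
  have "tmul (vp (y#ys)) ?X = tmul ?Y (tmul ?P ?X)" by (simp add: tmul_assoc)
  also have "cl_eq n q \<dots> (tmul ?Y (tsmul ((-1)^length ys) (tmul ?X ?P)))"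
    using Cons by (intro cl_eq_tmul_right ok) auto
  also have "\<dots> = tsmul ((-1)^length ys) (tmul (tmul ?Y ?X) ?P)" by (simp add: tmul_assoc)
  also have "cl_eq n q \<dots> (tsmul ((-1)^length ys) (tmul (tsmul (-1) (tmul ?X ?Y)) ?P))"
    using Cons.prems by (intro cl_eq_tsmul cl_eq_tmul_left cl_orth ok) auto
  also have "\<dots> = tsmul ((-1)^length (y#ys)) (tmul ?X (vp (y#ys)))" by (simp add: tmul_assoc)
  finally show ?case .
qed

lemma tri_aux: "Suc k * k div 2 = k * (k - 1) div 2 + k"
proof -
  have "Suc k * k = k * (k - 1) + 2 * k" by (cases k) (auto simp: algebra_simps)
  then show ?thesis by simp
qed

lemma cl_square: "set ys \<subseteq> vecsp n \<Longrightarrow> sorted_wrt (\<lambda>x y. Bq q x y = 0) ys \<Longrightarrow>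
   cl_eq n q (tmul (vp ys) (vp ys))
     (tsmul ((-1)^(length ys * (length ys - 1) div 2) * prod_list (map q ys)) tone)"
proof (induction ys)
  case Nil then show ?case by auto
next
  case (Cons x ys)
  let ?P = "vp ys" and ?X = "tvec x" and ?k = "length ys"
  have ok: "tens_ok n ?P" "x \<in> vecsp n" "tens_ok n ?X" using Cons.prems by auto
  have "tmul (vp (x#ys)) (vp (x#ys)) = tmul ?X (tmul (tmul ?P ?X) ?P)" by (simp add: tmul_assoc)
  also have "cl_eq n q \<dots> (tmul ?X (tmul (tsmul ((-1)^?k) (tmul ?X ?P)) ?P))"
    using Cons.prems by (intro cl_eq_tmul_right cl_eq_tmul_left cl_pass ok) auto
  also have "\<dots> = tsmul ((-1)^?k) (tmul (tmul ?X ?X) (tmul ?P ?P))" by (simp add: tmul_assoc)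
  also have "cl_eq n q \<dots> (tsmul ((-1)^?k) (tmul (tsmul (q x) tone) (tmul ?P ?P)))"
    using ok by (intro cl_eq_tsmul cl_eq_tmul_left cl_sq tens_ok_tmul) auto
  also have "\<dots> = tsmul ((-1)^?k * q x) (tmul ?P ?P)" by simp
  also have "cl_eq n q \<dots> (tsmul ((-1)^?k * q x) (tsmul ((-1)^(?k * (?k - 1) div 2) * prod_list (map q ys)) tone))"
    using Cons by (intro cl_eq_tsmul) auto
  also have "\<dots> = tsmul ((-1)^(length (x#ys) * (length (x#ys) - 1) div 2) * prod_list (map q (x#ys))) tone"
  proof -
    have "(-1::'a)^(Suc ?k * (Suc ?k - 1) div 2) = (-1)^?k * (-1)^(?k*(?k-1) div 2)"
      using tri_aux[of ?k] by (simp add: power_add mult.commute)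
    then show ?thesis by (simp add: algebra_simps)
  qed
  finally show ?case .
qed

lemma cl_yxy: assumes "y \<in> vecsp n" "p \<in> vecsp n" "p' \<in> vecsp n" "Bq q p y = 0" "Bq q p' y = 0"
  shows "cl_eq n q (tmul (tvec y) (tmul (tmul (tvec p) (tvec p')) (tvec y)))
                   (tsmul (q y) (tmul (tvec p) (tvec p')))"
proof -
  let ?Y = "tvec y" and ?A = "tvec p" and ?B = "tvec p'"
  have ok: "tens_ok n ?Y" "tens_ok n ?A" "tens_ok n ?B" using assms by auto
  have "tmul ?Y (tmul (tmul ?A ?B) ?Y) = tmul (tmul ?Y ?A) (tmul ?B ?Y)" by (simp add: tmul_assoc)
  also have "cl_eq n q \<dots> (tmul (tsmul (-1) (tmul ?A ?Y)) (tmul ?B ?Y))"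
    using assms ok by (intro cl_eq_tmul_left cl_orth tens_ok_tmul) auto
  also have "\<dots> = tsmul (-1) (tmul ?A (tmul (tmul ?Y ?B) ?Y))" by (simp add: tmul_assoc)
  also have "cl_eq n q \<dots> (tsmul (-1) (tmul ?A (tmul (tsmul (-1) (tmul ?B ?Y)) ?Y)))"
    using assms ok by (intro cl_eq_tsmul cl_eq_tmul_right cl_eq_tmul_left cl_orth) auto
  also have "\<dots> = tmul (tmul ?A ?B) (tmul ?Y ?Y)" by (simp add: tmul_assoc)
  also have "cl_eq n q \<dots> (tmul (tmul ?A ?B) (tsmul (q y) tone))"
    using assms ok by (intro cl_eq_tmul_right cl_sq tens_ok_tmul) auto
  also have "\<dots> = tsmul (q y) (tmul ?A ?B)" by simp
  finally show ?thesis .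
qed

lemma cl_conj2: "set ys \<subseteq> vecsp n \<Longrightarrow> p \<in> vecsp n \<Longrightarrow> p' \<in> vecsp n \<Longrightarrow>
  \<forall>y\<in>set ys. Bq q p y = 0 \<and> Bq q p' y = 0 \<Longrightarrow>
  cl_eq n q (tmul (vp ys) (tmul (tmul (tvec p) (tvec p')) (vp (rev ys))))
            (tsmul (prod_list (map q ys)) (tmul (tvec p) (tvec p')))"
proof (induction ys)
  case Nil then show ?case by auto
next
  case (Cons y ys)
  let ?P = "vp ys" and ?R = "vp (rev ys)" and ?Y = "tvec y" and ?X = "tmul (tvec p) (tvec p')"
  have ok: "tens_ok n ?P" "tens_ok n ?R" "tens_ok n ?Y" "y \<in> vecsp n" using Cons.prems by auto
  have "tmul (vp (y#ys)) (tmul ?X (vp (rev (y#ys)))) = tmul ?Y (tmul (tmul ?P (tmul ?X ?R)) ?Y)"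
    by (simp add: tmul_assoc vp_snoc)
  also have "cl_eq n q \<dots> (tmul ?Y (tmul (tsmul (prod_list (map q ys)) ?X) ?Y))"
    using Cons by (intro cl_eq_tmul_right cl_eq_tmul_left ok) auto
  also have "\<dots> = tsmul (prod_list (map q ys)) (tmul ?Y (tmul ?X ?Y))" by simp
  also have "cl_eq n q \<dots> (tsmul (prod_list (map q ys)) (tsmul (q y) ?X))"
    using Cons.prems by (intro cl_eq_tsmul cl_yxy) auto
  also have "\<dots> = tsmul (prod_list (map q (y#ys))) ?X" by (simp add: mult.commute)
  finally show ?case .
qed

lemma cl_eq_tsub: "cl_eq n q a a' \<Longrightarrow> cl_eq n q b b' \<Longrightarrow> cl_eq n q (tsub a b) (tsub a' b')"
proof -
  assume "cl_eq n q a a'" "cl_eq n q b b'"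
  moreover have "tsub (tsub a b) (tsub a' b') = tsub (tsub a a') (tsub b b')" by (rule ext) (simp add: tsub_def algebra_simps)
  ultimately show ?thesis unfolding cl_eq_def by (simp add: clideal_tsub)
qed

lemma cl_refl: assumes "x \<in> vecsp n" "y \<in> vecsp n"
  shows "cl_eq n q (tmul (tvec y) (tmul (tvec x) (tvec y)))
                   (tvec (vadd (vsc (Bq q x y) y) (vsc (- q y) x)))"
proof -
  let ?X = "tvec x" and ?Y = "tvec y"
  have ok: "tens_ok n ?X" "tens_ok n ?Y" using assms by auto
  have "tmul ?Y (tmul ?X ?Y) = tsub (tmul ?Y (tadd (tmul ?X ?Y) (tmul ?Y ?X))) (tmul (tmul ?Y ?Y) ?X)"
    by (simp add: tmul_tadd_right tmul_assoc) (rule ext, simp add: tsub_def tadd_def)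
  also have "cl_eq n q \<dots> (tsub (tmul ?Y (tsmul (Bq q x y) tone)) (tmul (tsmul (q y) tone) ?X))"
    using assms ok by (intro cl_eq_tsub cl_eq_tmul_right cl_eq_tmul_left cl_anti cl_sq) auto
  also have "\<dots> = tvec (vadd (vsc (Bq q x y) y) (vsc (- q y) x))"
    by (simp add: tvec_vadd tvec_vsc) (rule ext, simp add: tsub_def tadd_def tsmul_def)
  finally show ?thesis .
qed

lemma cl_conjvec: "set ys \<subseteq> vecsp n \<Longrightarrow> x \<in> vecsp n \<Longrightarrow>
   \<exists>z\<in>vecsp n. cl_eq n q (tmul (tmul (vp ys) (tvec x)) (vp (rev ys))) (tvec z)"
proof (induction ys)
  case Nil then show ?case by auto
next
  case (Cons y ys)
  then obtain z where z: "z \<in> vecsp n" "cl_eq n q (tmul (tmul (vp ys) (tvec x)) (vp (rev ys))) (tvec z)" by auto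
  have ok: "y \<in> vecsp n" "tens_ok n (tvec y)" using Cons.prems by auto
  have "tmul (tmul (vp (y#ys)) (tvec x)) (vp (rev (y#ys))) = tmul (tvec y) (tmul (tmul (tmul (vp ys) (tvec x)) (vp (rev ys))) (tvec y))"
    by (simp add: vp_snoc tmul_assoc)
  also have "cl_eq n q \<dots> (tmul (tvec y) (tmul (tvec z) (tvec y)))"
    using z ok by (intro cl_eq_tmul_right cl_eq_tmul_left) auto
  also have "cl_eq n q \<dots> (tvec (vadd (vsc (Bq q z y) y) (vsc (- q y) z)))"
    using z ok by (intro cl_refl) auto
  finally show ?case using z ok by blast
qed

lemma cl_comm2: assumes "set R \<subseteq> vecsp n" "v \<in> vecsp n" "u \<in> vecsp n"
    "\<forall>r\<in>set R. Bq q v r = 0 \<and> Bq q u r = 0"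
  shows "cl_eq n q (tmul (tmul (tvec v) (tvec u)) (vp R)) (tmul (vp R) (tmul (tvec v) (tvec u)))"
proof -
  let ?V = "tvec v" and ?U = "tvec u" and ?P = "vp R" and ?s = "(-1::'a)^length R"
  have ok: "tens_ok n ?V" "tens_ok n ?U" "tens_ok n ?P" using assms by auto
  have "tmul ?P (tmul ?V ?U) = tmul (tmul ?P ?V) ?U" by (simp add: tmul_assoc)
  also have "cl_eq n q \<dots> (tmul (tsmul ?s (tmul ?V ?P)) ?U)"
    using assms ok by (intro cl_eq_tmul_left cl_pass) auto
  also have "\<dots> = tsmul ?s (tmul ?V (tmul ?P ?U))" by (simp add: tmul_assoc)
  also have "cl_eq n q \<dots> (tsmul ?s (tmul ?V (tsmul ?s (tmul ?U ?P))))"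
    using assms ok by (intro cl_eq_tsmul cl_eq_tmul_right cl_pass) auto
  also have "\<dots> = tsmul (?s * ?s) (tmul (tmul ?V ?U) ?P)" by (simp add: tmul_assoc)
  also have "\<dots> = tmul (tmul ?V ?U) ?P"
    by (simp flip: power_add)
  finally show ?thesis by (rule cl_eq_sym)
qed

definition pv :: "nat \<Rightarrow> 'a::comm_ring_1 \<Rightarrow> 'a \<Rightarrow> nat \<Rightarrow> 'a" where
  "pv i c d = vadd (vsc c (basis_vec (2*i-1))) (vsc d (basis_vec (2*i)))"

lemma pv_apply: "pv i c d k = (if k = 2*i-1 then c else 0) + (if k = 2*i then d else 0)"
  by (simp add: pv_def vadd_def vsc_def basis_vec_def)

lemma pv_odd: assumes "1 \<le> i" "1 \<le> j" shows "pv i c d (2*j - Suc 0) = (if j = i then c else 0)"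
proof -
  have "2*j - Suc 0 \<noteq> 2*i" using assms by presburger
  moreover have "(2*j - Suc 0 = 2*i - 1) = (j = i)" using assms by presburger
  ultimately show ?thesis unfolding pv_apply by simp
qed
lemma pv_even: "1 \<le> i \<Longrightarrow> pv i c d (2*j) = (if j = i then d else 0)"
  by (simp add: pv_apply; presburger)
lemma pv_0: "1 \<le> i \<Longrightarrow> pv i c d 0 = 0"
  by (auto simp: pv_apply)

lemma e0_odd: "1 \<le> j \<Longrightarrow> basis_vec 0 (2*j - Suc 0) = (0::'a::comm_ring_1)"
  by (auto simp: basis_vec_def)
lemma e0_even: "1 \<le> j \<Longrightarrow> basis_vec 0 (2*j) = (0::'a::comm_ring_1)"
  by (auto simp: basis_vec_def)

lemma Bq_qform: "Bq (qform a m) x y = 2*a*x 0*y 0 + (\<Sum>j=1..m. x(2*j-1)*y(2*j) + y(2*j-1)*x(2*j))"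
proof -
  have "(\<Sum>j=1..m. (x(2*j-1)+y(2*j-1))*(x(2*j)+y(2*j))) =
        (\<Sum>j=1..m. x(2*j-1)*x(2*j)) + (\<Sum>j=1..m. y(2*j-1)*y(2*j)) + (\<Sum>j=1..m. x(2*j-1)*y(2*j) + y(2*j-1)*x(2*j))"
    by (simp add: sum.distrib[symmetric] algebra_simps)
  then show ?thesis by (simp add: Bq_def qform_def vadd_def power2_eq_square algebra_simps)
qed

lemma q_pv: "1 \<le> i \<Longrightarrow> i \<le> m \<Longrightarrow> qform a m (pv i c d) = c * d"
proof -
  assume i: "1 \<le> i" "i \<le> m"
  have "(\<Sum>j=1..m. pv i c d (2*j-1) * pv i c d (2*j)) = (\<Sum>j=1..m. if j = i then c*d else 0)"
    using i by (intro sum.cong) (auto simp: pv_odd pv_even)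
  then show ?thesis using i by (simp add: qform_def pv_0)
qed

lemma q_e0: "qform a m (basis_vec 0) = a"
proof -
  have "(\<Sum>j=1..m. basis_vec 0 (2*j-1) * basis_vec 0 (2*j)) = (0::'a)"
    by (intro sum.neutral) (auto simp: e0_odd)
  then show ?thesis by (simp add: qform_def basis_vec_def)
qed

lemma B_pv_same: "1 \<le> i \<Longrightarrow> i \<le> m \<Longrightarrow> Bq (qform a m) (pv i c d) (pv i c' d') = c*d' + c'*d"
proof -
  assume i: "1 \<le> i" "i \<le> m"
  have "(\<Sum>j=1..m. pv i c d (2*j-1) * pv i c' d' (2*j) + pv i c' d' (2*j-1) * pv i c d (2*j))
       = (\<Sum>j=1..m. if j = i then c*d' + c'*d else 0)"
    using i by (intro sum.cong) (auto simp: pv_odd pv_even)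
  then show ?thesis using i by (simp add: Bq_qform pv_0)
qed

lemma B_pv_diff: "1 \<le> i \<Longrightarrow> 1 \<le> i' \<Longrightarrow> i \<noteq> i' \<Longrightarrow> Bq (qform a m) (pv i c d) (pv i' c' d') = 0"
proof -
  assume i: "1 \<le> i" "1 \<le> i'" "i \<noteq> i'"
  have "(\<Sum>j=1..m. pv i c d (2*j-1) * pv i' c' d' (2*j) + pv i' c' d' (2*j-1) * pv i c d (2*j))
       = (\<Sum>j=1..m. (0::'a))"
    using i by (intro sum.cong) (auto simp: pv_odd pv_even)
  then show ?thesis using i by (simp add: Bq_qform pv_0)
qed

lemma B_e0_pv: "1 \<le> i \<Longrightarrow> Bq (qform a m) (basis_vec 0) (pv i c d) = 0"
proof -
  assume i: "1 \<le> i"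
  have "(\<Sum>j=1..m. basis_vec 0 (2*j-1) * pv i c d (2*j) + pv i c d (2*j-1) * basis_vec 0 (2*j))
       = (\<Sum>j=1..m. (0::'a))"
    using i by (intro sum.cong) (auto simp: e0_odd e0_even)
  then show ?thesis using i by (simp add: Bq_qform pv_0)
qed

lemma B_pv_e0: "1 \<le> i \<Longrightarrow> Bq (qform a m) (pv i c d) (basis_vec 0) = 0"
  using B_e0_pv Bq_sym by metis

lemma pv_vecsp: "i \<le> m \<Longrightarrow> pv i c d \<in> vecsp (2*m+1)"
  by (auto simp: vecsp_def pv_apply)
lemma pv_vecsp'[simp]: "i \<le> m \<Longrightarrow> pv i c d \<in> vecsp (Suc (2*m))"
  using pv_vecsp by simp
lemma e0_vecsp: "basis_vec 0 \<in> vecsp (2*m+1)"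
  by (auto simp: vecsp_def basis_vec_def)

lemma e_pv: "basis_vec (2*i-1) = pv i (1::'a::comm_ring_1) 0"
  by (rule ext) (simp add: pv_apply basis_vec_def)
lemma f_pv: "basis_vec (2*i) = pv i (0::'a::comm_ring_1) 1"
  by (rule ext) (simp add: pv_apply basis_vec_def)

lemma tvec_pv: "tvec (pv i c d) = tadd (tsmul c (tvec (basis_vec (2*i-1)))) (tsmul d (tvec (basis_vec (2*i))))"
  by (simp add: pv_def tvec_vadd tvec_vsc)

lemma cl_NF:
  fixes a :: "'a::field"
  assumes i: "1 \<le> i" "i \<le> m"
  defines "E \<equiv> tvec (basis_vec (2*i-1)) :: 'a tens" and "F \<equiv> tvec (basis_vec (2*i)) :: 'a tens"
  shows "cl_eq (2*m+1) (qform a m) (tmul (tvec (pv i c d)) (tvec (pv i c' d')))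
           (tadd (tsmul (d*c') tone) (tsmul (c*d' - d*c') (tmul E F)))"
proof -
  let ?n = "2*m+1" and ?q = "qform a m"
  have ve: "(basis_vec (2*i-1) :: nat \<Rightarrow> 'a) \<in> vecsp ?n" using i pv_vecsp[of i m "1::'a" 0] e_pv[of i, where 'a='a] by metis
  have vf: "(basis_vec (2*i) :: nat \<Rightarrow> 'a) \<in> vecsp ?n" using i pv_vecsp[of i m "0::'a" 1] f_pv[of i, where 'a='a] by metis
  have okE: "tens_ok ?n E" and okF: "tens_ok ?n F" using ve vf by (auto simp: E_def F_def)
  have qe: "?q (basis_vec (2*i-1)) = 0" using i by (subst e_pv) (simp add: q_pv)
  have qf: "?q (basis_vec (2*i)) = 0" using i by (subst f_pv) (simp add: q_pv)
  have bef: "Bq ?q (basis_vec (2*i-1)) (basis_vec (2*i)) = 1" using i by (subst e_pv, subst f_pv) (simp add: B_pv_same)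
  have EE: "cl_eq ?n ?q (tmul E E) (tsmul 0 tone)" using cl_sq[OF ve, of ?q] qe by (simp add: E_def)
  have FF: "cl_eq ?n ?q (tmul F F) (tsmul 0 tone)" using cl_sq[OF vf, of ?q] qf by (simp add: F_def)
  have FE: "cl_eq ?n ?q (tmul F E) (tsub tone (tmul E F))"
  proof -
    have "tmul F E = tsub (tadd (tmul E F) (tmul F E)) (tmul E F)"
      by (rule ext) (simp add: tsub_def tadd_def)
    also have "cl_eq ?n ?q \<dots> (tsub (tsmul 1 tone) (tmul E F))"
      using cl_anti[OF ve vf, of ?q] bef by (intro cl_eq_tsub) (auto simp: E_def F_def)
    finally show ?thesis by simp
  qed
  have "tmul (tvec (pv i c d)) (tvec (pv i c' d')) =
     tadd (tadd (tsmul (c*c') (tmul E E)) (tsmul (c*d') (tmul E F))) (tadd (tsmul (d*c') (tmul F E)) (tsmul (d*d') (tmul F F)))"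
    unfolding tvec_pv E_def F_def
    by (simp add: tmul_tadd_left tmul_tadd_right) (rule ext, simp add: tadd_def tsmul_def algebra_simps)
  also have "cl_eq ?n ?q \<dots>
     (tadd (tadd (tsmul (c*c') (tsmul 0 tone)) (tsmul (c*d') (tmul E F))) (tadd (tsmul (d*c') (tsub tone (tmul E F))) (tsmul (d*d') (tsmul 0 tone))))"
    using EE FF FE by (intro cl_eq_tadd cl_eq_tsmul cl_eq_refl)
  also have "\<dots> = tadd (tsmul (d*c') tone) (tsmul (c*d' - d*c') (tmul E F))"
    by (rule ext) (simp add: tadd_def tsmul_def tsub_def algebra_simps)
  finally show ?thesis .
qed

lemma refl_pv: "1 \<le> i \<Longrightarrow> i \<le> m \<Longrightarrow>
  vadd (vsc (Bq (qform a m) (pv i c d) (pv i 1 b)) (pv i 1 b)) (vsc (- qform a m (pv i 1 b)) (pv i c d))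
   = pv i d (c*b*b)"
  by (rule ext) (simp add: B_pv_same q_pv vadd_def vsc_def pv_apply algebra_simps)

lemma cl_own:
  fixes a :: "'a::field"
  assumes i: "1 \<le> i" "i \<le> m" and b: "b \<noteq> 0"
  shows "cl_eq (2*m+1) (qform a m)
     (tmul (tvec (pv i 1 b)) (tmul (tmul (tvec (pv i 1 1)) (tvec (pv i 1 l))) (tvec (pv i 1 b))))
     (tsmul b (tmul (tvec (pv i 1 l)) (tvec (pv i 1 1))))"
proof -
  let ?n = "2*m+1" and ?q = "qform a m"
  let ?Y = "tvec (pv i 1 b)" and ?U = "tvec (pv i 1 1)" and ?V = "tvec (pv i 1 l)"
  let ?E = "tvec (basis_vec (2*i-1)) :: 'a tens" and ?F = "tvec (basis_vec (2*i)) :: 'a tens"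
  have vs: "\<And>c d. pv i c d \<in> vecsp ?n" using i pv_vecsp by blast
  have ok: "\<And>c d. tens_ok ?n (tvec (pv i c d))" using vs by auto
  have qy: "?q (pv i 1 b) = b" using i by (simp add: q_pv)
  have "tsmul b (tmul ?Y (tmul (tmul ?U ?V) ?Y)) = tmul ?Y (tmul ?U (tmul (tsmul b tone) (tmul ?V ?Y)))"
    by (simp add: tmul_assoc)
  also have "cl_eq ?n ?q \<dots> (tmul ?Y (tmul ?U (tmul (tmul ?Y ?Y) (tmul ?V ?Y))))"
  proof -
    have "cl_eq ?n ?q (tsmul b tone) (tmul ?Y ?Y)"
      using cl_sq[OF vs, of ?q 1 b] qy by (simp add: cl_eq_sym)
    then show ?thesis using ok by (intro cl_eq_tmul_right cl_eq_tmul_left tens_ok_tmul) auto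
  qed
  also have "\<dots> = tmul (tmul ?Y (tmul ?U ?Y)) (tmul ?Y (tmul ?V ?Y))" by (simp add: tmul_assoc)
  also have "cl_eq ?n ?q \<dots> (tmul (tvec (pv i 1 (1*b*b))) (tvec (pv i l (1*b*b))))"
  proof -
    have h1: "cl_eq ?n ?q (tmul ?Y (tmul ?U ?Y)) (tvec (pv i 1 (1*b*b)))"
      using cl_refl[where x="pv i 1 1" and y="pv i 1 b" and q="?q", OF vs vs] refl_pv[OF i, of a 1 1 b] by simp
    have h2: "cl_eq ?n ?q (tmul ?Y (tmul ?V ?Y)) (tvec (pv i l (1*b*b)))"
      using cl_refl[where x="pv i 1 l" and y="pv i 1 b" and q="?q", OF vs vs] refl_pv[OF i, of a 1 l b] by simp
    have o1: "tens_ok ?n (tmul ?Y (tmul ?V ?Y))" using ok by auto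
    show ?thesis by (rule cl_eq_trans[OF cl_eq_tmul_left[OF h1 o1] cl_eq_tmul_right[OF h2 ok]])
  qed
  also have "cl_eq ?n ?q \<dots> (tadd (tsmul (b*b*l) tone) (tsmul (b*b - b*b*l) (tmul ?E ?F)))"
    using cl_NF[OF i, of a 1 "1*b*b" l "1*b*b"] by simp
  also have "\<dots> = tsmul (b*b) (tadd (tsmul l tone) (tsmul (1 - l) (tmul ?E ?F)))"
    by (rule ext) (simp add: tadd_def tsmul_def algebra_simps)
  also have "cl_eq ?n ?q \<dots> (tsmul (b*b) (tmul ?V ?U))"
  proof -
    have "cl_eq ?n ?q (tmul ?V ?U) (tadd (tsmul l tone) (tsmul (1 - l) (tmul ?E ?F)))"
      using cl_NF[OF i, of a 1 l 1 1] by simp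
    then show ?thesis by (intro cl_eq_tsmul) (rule cl_eq_sym)
  qed
  finally have "cl_eq ?n ?q (tsmul b (tmul ?Y (tmul (tmul ?U ?V) ?Y))) (tsmul (b*b) (tmul ?V ?U))" .
  then have "cl_eq ?n ?q (tsmul (inverse b) (tsmul b (tmul ?Y (tmul (tmul ?U ?V) ?Y))))
                         (tsmul (inverse b) (tsmul (b*b) (tmul ?V ?U)))"
    by (rule cl_eq_tsmul)
  then show ?thesis using b by (simp add: field_simps)
qed

definition yy :: "'a::field \<Rightarrow> nat \<Rightarrow> nat \<Rightarrow> 'a" where
  "yy a i = pv i 1 (if i = 1 then inverse a else 1)"
definition ysl :: "'a::field \<Rightarrow> nat \<Rightarrow> (nat \<Rightarrow> 'a) list" where
  "ysl a m = basis_vec 0 # map (yy a) [1..<m+1]"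
definition blk :: "(nat \<Rightarrow> 'a::field) \<Rightarrow> nat \<Rightarrow> (nat \<Rightarrow> 'a) list" where
  "blk lam i = [pv i 1 1, pv i 1 (lam i)]"
definition blk' :: "(nat \<Rightarrow> 'a::field) \<Rightarrow> nat \<Rightarrow> (nat \<Rightarrow> 'a) list" where
  "blk' lam i = [pv i 1 (lam i), pv i 1 1]"

lemma T_elem_vp: "T_elem m lam = tsmul (lam 0) (vp (concat (map (blk lam) [1..<m+1])))"
proof -
  have "tprod_list (map (\<lambda>i.
      tmul (tadd (tvec (e_vec i)) (tvec (f_vec i)))
           (tadd (tvec (e_vec i)) (tsmul (lam i) (tvec (f_vec i))))) L) = vp (concat (map (blk lam) L))" for L
  proof (induction L)
    case Nil then show ?case by (simp add: tprod_list_def)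
  next
    case (Cons i L)
    have "tadd (tvec (basis_vec (2*i - Suc 0))) (tvec (f_vec i)) = tvec (pv i (1::'a) 1)" by (simp add: tvec_pv)
    moreover have "tadd (tvec (basis_vec (2*i - Suc 0))) (tsmul (lam i) (tvec (f_vec i))) = tvec (pv i 1 (lam i))" by (simp add: tvec_pv)
    ultimately show ?case using Cons by (simp add: tprod_list_def blk_def vp_append tmul_assoc)
  qed
  then show ?thesis by (simp add: T_elem_def)
qed

lemma upt_split3: "1 \<le> i \<Longrightarrow> i \<le> m \<Longrightarrow> [1..<m+1] = [1..<i] @ i # [Suc i..<m+1]"
proof -
  assume a: "1 \<le> i" "i \<le> m"
  have "[1..<m+1] = [1..<i] @ [i..<m+1]" using upt_add_eq_append[of 1 i "m+1-i"] a by simp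
  then show ?thesis using upt_conv_Cons[of i "m+1"] a by simp
qed

lemma prod_ones: "\<forall>x\<in>set L. f x = (1::'a::comm_monoid_mult) \<Longrightarrow> prod_list (map f L) = 1"
  by (induction L) auto

lemma q_yy: "1 \<le> i \<Longrightarrow> i \<le> m \<Longrightarrow> qform a m (yy a i) = (if i = 1 then inverse a else 1)"
  by (simp add: yy_def q_pv)

lemma prod_yy: "distinct L \<Longrightarrow> set L \<subseteq> {1..m} \<Longrightarrow>
   prod_list (map (qform a m \<circ> yy a) L) = (if 1 \<in> set L then inverse a else 1)"
  by (induction L) (auto simp: q_yy)

lemma prod_ys: assumes "1 \<le> m" shows "prod_list (map (qform a m) (ysl a m)) = a * inverse a"
proof -
  have "prod_list (map (qform a m \<circ> yy a) [1..<m+1]) = inverse a"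
    using assms by (subst prod_yy) auto
  then show ?thesis by (simp add: ysl_def q_e0)
qed

lemma e0_vecsp'[simp]: "basis_vec 0 \<in> vecsp (Suc (2*m))"
  using e0_vecsp by simp

lemma ysl_vecsp: "set (ysl a m) \<subseteq> vecsp (2*m+1)"
  by (auto simp: ysl_def yy_def pv_vecsp e0_vecsp)

lemma xs_vecsp: "set (concat (map (blk lam) [1..<m+1])) \<subseteq> vecsp (2*m+1)"
  by (auto simp: blk_def pv_vecsp)

lemma ysl_orth: "sorted_wrt (\<lambda>x y. Bq (qform a m) x y = 0) (ysl a m)"
proof -
  have "sorted_wrt (\<lambda>x y. Bq (qform a m) x y = 0) (map (yy a) [1..<m+1])"
    unfolding sorted_wrt_map
    by (rule sorted_wrt_mono_rel[OF _ sorted_wrt_upt]) (auto simp: yy_def B_pv_diff)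
  then show ?thesis by (auto simp: ysl_def yy_def B_e0_pv)
qed

lemma cl_C1:
  fixes a :: "'a::field"
  assumes i: "1 \<le> i" "i \<le> m" and a: "a \<noteq> 0"
  shows "cl_eq (2*m+1) (qform a m)
     (tmul (tmul (vp (ysl a m)) (tmul (tvec (pv i 1 1)) (tvec (pv i 1 l)))) (vp (rev (ysl a m))))
     (tmul (tvec (pv i 1 l)) (tvec (pv i 1 1)))"
proof -
  let ?n = "2*m+1" and ?q = "qform a m"
  define A where "A = basis_vec 0 # map (yy a) [1..<i]"
  define post where "post = map (yy a) [Suc i..<m+1]"
  define b where "b = (if i = 1 then inverse a else (1::'a))"
  let ?Y = "tvec (yy a i)" and ?U = "tvec (pv i 1 (1::'a))" and ?V = "tvec (pv i 1 l)"
  let ?UV = "tmul ?U ?V" and ?VU = "tmul ?V ?U"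
  have split: "ysl a m = A @ yy a i # post"
    unfolding ysl_def A_def post_def using upt_split3[OF i] by simp
  have vA: "set A \<subseteq> vecsp ?n" and vpost: "set post \<subseteq> vecsp ?n" and vy: "yy a i \<in> vecsp ?n"
    using ysl_vecsp[of a m] unfolding split by auto
  have vU: "pv i 1 1 \<in> vecsp ?n" and vV: "pv i 1 l \<in> vecsp ?n" using i by (auto simp: pv_vecsp)
  have okY: "tens_ok ?n ?Y" using vy by auto
  have b0: "b \<noteq> 0" using a by (simp add: b_def)
  have yb: "yy a i = pv i 1 b" by (simp add: yy_def b_def)
  have orth_post: "\<forall>y\<in>set post. Bq ?q (pv i 1 1) y = 0 \<and> Bq ?q (pv i 1 l) y = 0"
    using i by (auto simp: post_def yy_def B_pv_diff)
  have orth_A: "\<forall>y\<in>set A. Bq ?q (pv i 1 l) y = 0 \<and> Bq ?q (pv i 1 1) y = 0"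
    using i by (auto simp: A_def yy_def B_pv_diff B_pv_e0)
  have prod1: "prod_list (map ?q A) * (b * prod_list (map ?q post)) = 1"
  proof -
    have "prod_list (map ?q (ysl a m)) = a * inverse a" using prod_ys[of m a] i by simp
    then show ?thesis using a i unfolding split by (simp add: q_yy b_def)
  qed
  have "tmul (tmul (vp (ysl a m)) ?UV) (vp (rev (ysl a m)))
      = tmul (vp A) (tmul (tmul ?Y (tmul (tmul (vp post) (tmul ?UV (vp (rev post)))) ?Y)) (vp (rev A)))"
    unfolding split by (simp add: vp_append tmul_assoc)
  also have "cl_eq ?n ?q \<dots> (tmul (vp A) (tmul (tmul ?Y (tmul (tsmul (prod_list (map ?q post)) ?UV) ?Y)) (vp (rev A))))"
    using cl_conj2[OF vpost vU vV orth_post] vA okY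
    by (intro cl_eq_tmul_right cl_eq_tmul_left) auto
  also have "\<dots> = tsmul (prod_list (map ?q post)) (tmul (vp A) (tmul (tmul ?Y (tmul ?UV ?Y)) (vp (rev A))))"
    by simp
  also have "cl_eq ?n ?q \<dots> (tsmul (prod_list (map ?q post)) (tmul (vp A) (tmul (tsmul b ?VU) (vp (rev A)))))"
    using cl_own[OF i b0, of a l] vA unfolding yb
    by (intro cl_eq_tsmul cl_eq_tmul_right cl_eq_tmul_left) auto
  also have "\<dots> = tsmul (prod_list (map ?q post) * b) (tmul (vp A) (tmul ?VU (vp (rev A))))"
    by simp
  also have "cl_eq ?n ?q \<dots> (tsmul (prod_list (map ?q post) * b) (tsmul (prod_list (map ?q A)) ?VU))"
    using cl_conj2[OF vA vV vU orth_A] by (intro cl_eq_tsmul)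
  also have "\<dots> = ?VU" using prod1 by (simp add: algebra_simps)
  finally show ?thesis .
qed

lemma ysl_norm:
  fixes a :: "'a::field"
  assumes m: "1 \<le> m" and a: "a \<noteq> 0"
  shows "cl_eq (2*m+1) (qform a m) (tmul (vp (rev (ysl a m))) (vp (ysl a m))) tone"
    "cl_eq (2*m+1) (qform a m) (tmul (vp (ysl a m)) (vp (rev (ysl a m)))) tone"
  using cl_norm[OF ysl_vecsp[of a m], where q="qform a m"] cl_norm'[OF ysl_vecsp[of a m], where q="qform a m"] prod_ys[where a=a, OF m] a
  by simp_all

lemma cl_K:
  fixes a :: "'a::field"
  assumes m: "1 \<le> m" and a: "a \<noteq> 0"
  shows "distinct L \<Longrightarrow> set L \<subseteq> {1..m} \<Longrightarrow>
    cl_eq (2*m+1) (qform a m)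
     (tmul (tmul (vp (ysl a m)) (vp (concat (map (blk lam) L)))) (vp (rev (ysl a m))))
     (vp (concat (map (blk' lam) (rev L))))"
proof (induction L)
  case Nil
  then show ?case using ysl_norm[OF m a] by simp
next
  case (Cons i L)
  let ?n = "2*m+1" and ?q = "qform a m"
  let ?s = "vp (ysl a m)" and ?si = "vp (rev (ysl a m))"
  have oks: "tens_ok ?n ?s" "tens_ok ?n ?si" using ysl_vecsp[of a m] by auto
  let ?U = "tvec (pv i 1 (1::'a))" and ?V = "tvec (pv i 1 (lam i))"
  let ?W = "vp (concat (map (blk lam) L))" and ?R' = "concat (map (blk' lam) (rev L))"
  have i: "1 \<le> i" "i \<le> m" using Cons.prems by auto
  have vW: "set (concat (map (blk lam) L)) \<subseteq> vecsp ?n" using Cons.prems by (auto simp: blk_def pv_vecsp)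
  have vR: "set ?R' \<subseteq> vecsp ?n" using Cons.prems by (auto simp: blk'_def pv_vecsp)
  have okU: "tens_ok ?n ?U" "tens_ok ?n ?V" using i by (auto simp: pv_vecsp)
  have okW: "tens_ok ?n ?W" by (rule vp_ok[OF vW])
  have ns: "cl_eq ?n ?q tone (tmul ?si ?s)" using ysl_norm(1)[OF m a] by (rule cl_eq_sym)
  have "tmul (tmul ?s (vp (concat (map (blk lam) (i#L))))) ?si
      = tmul (tmul ?s (tmul ?U ?V)) (tmul tone (tmul ?W ?si))"
    by (simp add: blk_def vp_append tmul_assoc)
  also have "cl_eq ?n ?q \<dots> (tmul (tmul ?s (tmul ?U ?V)) (tmul (tmul ?si ?s) (tmul ?W ?si)))"
    using ns oks okU okW
    by (intro cl_eq_tmul_right cl_eq_tmul_left tens_ok_tmul) auto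
  also have "\<dots> = tmul (tmul (tmul ?s (tmul ?U ?V)) ?si) (tmul (tmul ?s ?W) ?si)"
    by (simp add: tmul_assoc)
  also have "cl_eq ?n ?q \<dots> (tmul (tmul ?V ?U) (tmul (tmul ?s ?W) ?si))"
    using cl_C1[OF i a, of "lam i"] oks okW
    by (intro cl_eq_tmul_left) auto
  also have "cl_eq ?n ?q \<dots> (tmul (tmul ?V ?U) (vp ?R'))"
    using Cons okU by (intro cl_eq_tmul_right) auto
  also have "cl_eq ?n ?q \<dots> (tmul (vp ?R') (tmul ?V ?U))"
  proof (rule cl_comm2[OF vR])
    show "pv i 1 (lam i) \<in> vecsp ?n" "pv i 1 1 \<in> vecsp ?n" using i by (auto simp: pv_vecsp)
    show "\<forall>r\<in>set ?R'. Bq ?q (pv i 1 (lam i)) r = 0 \<and> Bq ?q (pv i 1 1) r = 0"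
    proof
      fix r assume "r \<in> set ?R'"
      then obtain j where j: "j \<in> set L" "r = pv j 1 (lam j) \<or> r = pv j 1 1" by (auto simp: blk'_def)
      have "1 \<le> j" "i \<noteq> j" using j Cons.prems by auto
      then show "Bq ?q (pv i 1 (lam i)) r = 0 \<and> Bq ?q (pv i 1 1) r = 0"
        using j i by (auto simp: B_pv_diff)
    qed
  qed
  also have "\<dots> = vp (concat (map (blk' lam) (rev (i#L))))"
    by (simp add: blk'_def vp_append tmul_assoc)
  finally show ?case .
qed

lemma rev_blk: "rev (concat (map (blk lam) L)) = concat (map (blk' lam) (rev L))"
  by (induction L) (auto simp: blk_def blk'_def)

theorem corollary5p9:
  fixes a :: "'a::field" and m :: nat and lam :: "nat \<Rightarrow> 'a"
  assumes "perfect_field TYPE('a)"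
    and "CHAR('a) \<noteq> 2"
    and "odd m"
    and "a \<noteq> 0"
    and "\<forall>i\<le>m. lam i \<noteq> 0"
  shows "\<exists>s si ti.
           in_Gamma_plus (2*m+1) (qform a m) s
         \<and> cl_inv (2*m+1) (qform a m) s si
         \<and> cl_inv (2*m+1) (qform a m) (T_elem m lam) ti
         \<and> cl_eq (2*m+1) (qform a m) (tmul (tmul s (T_elem m lam)) si)
                                      (tmul (Nrm (T_elem m lam)) ti)
         \<and> cl_eq (2*m+1) (qform a m) (Nrm s) tone
         \<and> cl_eq (2*m+1) (qform a m) (tmul s s) (tsmul ((-1) ^ (m*(m+1) div 2)) tone)"
proof -
  let ?n = "2*m+1" and ?q = "qform a m"
  have m: "1 \<le> m" using assms(3) by (cases m) auto
  have a: "a \<noteq> 0" by (rule assms(4))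
  define s where "s = vp (ysl a m)"
  define si where "si = vp (rev (ysl a m))"
  define xs where "xs = concat (map (blk lam) [1..<m+1])"
  define Lp where "Lp = prod_list (map ?q xs)"
  define ti where "ti = tsmul (inverse (lam 0) * inverse Lp) (vp (rev xs))"
  have t: "T_elem m lam = tsmul (lam 0) (vp xs)" by (simp add: T_elem_vp xs_def)
  have vys: "set (ysl a m) \<subseteq> vecsp ?n" by (rule ysl_vecsp)
  have vxs: "set xs \<subseteq> vecsp ?n" unfolding xs_def by (rule xs_vecsp)
  have oks: "tens_ok ?n s" "tens_ok ?n si" using vys by (auto simp: s_def si_def)
  have okx: "tens_ok ?n (vp xs)" "tens_ok ?n (vp (rev xs))" using vxs by auto
  have okti: "tens_ok ?n ti" using okx by (auto simp: ti_def)
  have l0: "lam 0 \<noteq> 0" using assms(5) by auto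
  have Lp0: "Lp \<noteq> 0"
  proof
    assume "Lp = 0"
    then have "0 \<in> set (map ?q xs)" by (simp add: Lp_def prod_list_zero_iff)
    then obtain i where i: "1 \<le> i" "i \<le> m" "?q (pv i 1 1) = 0 \<or> ?q (pv i 1 (lam i)) = 0"
      by (auto simp: xs_def blk_def)
    then show False using assms(5) by (auto simp: q_pv)
  qed
  have sn: "cl_eq ?n ?q (tmul si s) tone" "cl_eq ?n ?q (tmul s si) tone"
    using ysl_norm[OF m a] by (simp_all add: s_def si_def)
  have inv_s: "cl_inv ?n ?q s si" using sn oks by (simp add: cl_inv_def)
  have conj: "\<forall>x\<in>vecsp ?n. \<exists>y\<in>vecsp ?n. cl_eq ?n ?q (tmul (tmul s (tvec x)) si) (tvec y)"
    using cl_conjvec[OF vys] by (simp add: s_def si_def)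
  have ev: "\<forall>w. s w \<noteq> 0 \<longrightarrow> even (length w)"
  proof (intro allI impI)
    fix w assume "s w \<noteq> 0"
    then have "length w = length (ysl a m)" unfolding s_def by (rule vp_len)
    then show "even (length w)" using assms(3) m by (simp add: ysl_def)
  qed
  have G: "in_Gamma_plus ?n ?q s"
    unfolding in_Gamma_plus_def in_Gamma_def cl_even_def
    using oks inv_s conj ev by blast
  have inv_t: "cl_inv ?n ?q (T_elem m lam) ti"
  proof -
    have "tmul (T_elem m lam) ti = tsmul (lam 0 * (inverse (lam 0) * inverse Lp)) (tmul (vp xs) (vp (rev xs)))"
      by (simp add: t ti_def mult.commute)
    also have "cl_eq ?n ?q \<dots> (tsmul (lam 0 * (inverse (lam 0) * inverse Lp)) (tsmul Lp tone))"
      using cl_norm'[OF vxs, of ?q] by (intro cl_eq_tsmul) (simp add: Lp_def)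
    also have "\<dots> = tone" using l0 Lp0 by (simp add: field_simps)
    finally have 1: "cl_eq ?n ?q (tmul (T_elem m lam) ti) tone" .
    have "tmul ti (T_elem m lam) = tsmul (inverse (lam 0) * inverse Lp * lam 0) (tmul (vp (rev xs)) (vp xs))"
      by (simp add: t ti_def mult.commute)
    also have "cl_eq ?n ?q \<dots> (tsmul (inverse (lam 0) * inverse Lp * lam 0) (tsmul Lp tone))"
      using cl_norm[OF vxs, of ?q] by (intro cl_eq_tsmul) (simp add: Lp_def)
    also have "\<dots> = tone" using l0 Lp0 by (simp add: field_simps)
    finally have 2: "cl_eq ?n ?q (tmul ti (T_elem m lam)) tone" .
    show ?thesis using 1 2 okti by (simp add: cl_inv_def)
  qed
  have main: "cl_eq ?n ?q (tmul (tmul s (T_elem m lam)) si) (tmul (Nrm (T_elem m lam)) ti)"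
  proof -
    have "tmul (tmul s (T_elem m lam)) si = tsmul (lam 0) (tmul (tmul s (vp xs)) si)"
      by (simp add: t)
    also have "cl_eq ?n ?q \<dots> (tsmul (lam 0) (vp (rev xs)))"
    proof (rule cl_eq_tsmul)
      have "distinct [1..<m+1]" "set [1..<m+1] \<subseteq> {1..m}" by auto
      from cl_K[OF m a this, of lam]
      show "cl_eq ?n ?q (tmul (tmul s (vp xs)) si) (vp (rev xs))"
        unfolding s_def si_def xs_def rev_blk .
    qed
    finally have 1: "cl_eq ?n ?q (tmul (tmul s (T_elem m lam)) si) (tsmul (lam 0) (vp (rev xs)))" .
    have "tmul (Nrm (T_elem m lam)) ti = tmul (tsmul (lam 0 * lam 0) (tmul (vp (rev xs)) (vp xs))) ti"
      by (simp add: Nrm_def t trev_vp)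
    also have "cl_eq ?n ?q \<dots> (tmul (tsmul (lam 0 * lam 0) (tsmul Lp tone)) ti)"
      using cl_norm[OF vxs, of ?q] okti by (intro cl_eq_tmul_left cl_eq_tsmul) (simp_all add: Lp_def)
    also have "\<dots> = tsmul (lam 0) (vp (rev xs))"
      using l0 Lp0 by (simp add: ti_def field_simps)
    finally have 2: "cl_eq ?n ?q (tmul (Nrm (T_elem m lam)) ti) (tsmul (lam 0) (vp (rev xs)))" .
    show ?thesis using 1 2 by (meson cl_eq_sym cl_eq_trans)
  qed
  have Ns: "cl_eq ?n ?q (Nrm s) tone"
    using sn by (simp add: Nrm_def s_def si_def trev_vp)
  have sq: "cl_eq ?n ?q (tmul s s) (tsmul ((-1) ^ (m*(m+1) div 2)) tone)"
  proof -
    have "cl_eq ?n ?q (tmul s s) (tsmul ((-1)^(length (ysl a m) * (length (ysl a m) - 1) div 2) * prod_list (map ?q (ysl a m))) tone)"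
      unfolding s_def by (rule cl_square[OF vys ysl_orth])
    moreover have "(-1::'a)^(length (ysl a m) * (length (ysl a m) - 1) div 2) * prod_list (map ?q (ysl a m))
         = (-1) ^ (m*(m+1) div 2)"
    proof -
      have len: "length (ysl a m) = m+1" by (simp add: ysl_def)
      show ?thesis using prod_ys[where a=a, OF m] a by (simp only: len) (simp add: mult.commute)
    qed
    ultimately show ?thesis by simp
  qed
  show ?thesis using G inv_s inv_t main Ns sq by blast
qed

end
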